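(* For every nonnegative Borel $f$ on $\mathbb R$, every $t>0$ and $\delta\in\mathbb R$, $$U_{1,f}(t,\sqrt{2\alpha}\delta t)\le\begin{cases}e^{-qt},&\delta\ge0,\\ \frac{1}{2\sqrt{\pi\alpha}|\delta|}t^{-1/2}e^{-(q+\alpha\delta^2)t},&\delta<0,\end{cases}$$ where $U_{1,f}(t,x)=\mathrm E\big[e^{-\int_0^t\psi'(\lambda^*+u^*_f(t-r,x-B_r))dr};\,B_t\le x\big]$.
   Context: $B$ is a standard Brownian motion started at $0$ under $\mathrm P$. Let $\alpha>0$, $\beta\ge0$, $n$ a $\sigma$-finite measure on $(0,\infty)$ with $\int(y^2\wedge y)n(dy)<\infty$, $\psi(\lambda)=-\alpha\lambda+\beta\lambda^2+\int_0^\infty(e^{-\lambda y}-1+\lambda y)n(dy)$ with $\psi(\lambda)\to\infty$. $X$ is a super-Brownian motion on $\mathbb R$ with branching mechanism $\psi$; $\lambda^*>0$ is the largest root of $\psi=0$, $q=\psi'(\lambda^* )$. $M_t=\sup\{x:X_t((x,\infty))>0\}$. $\mathbb P^*$ is the law of $X$ started from $\delta_0$ conditioned on extinction, and $u^*_f(t,x)=-\log\mathbb E^*(e^{-\int f(y-x)X_t(dy)};M_t\le x)$. *)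

theory Defs
  imports "HOL-Probability.Probability"
begin

definition psi :: "real \<Rightarrow> real \<Rightarrow> real measure \<Rightarrow> real \<Rightarrow> real" where
  "psi a b n l = - a * l + b * l\<^sup>2 +
     enn2real (\<integral>\<^sup>+ y\<in>{0<..}. ennreal (exp (- l * y) - 1 + l * y) \<partial>n)"

definition std_bm :: "'w measure \<Rightarrow> (real \<Rightarrow> 'w \<Rightarrow> real) \<Rightarrow> bool" where
  "std_bm P B \<longleftrightarrow> prob_space P \<and>
     (\<forall>t. B t \<in> borel_measurable P) \<and>
     (\<forall>\<omega>\<in>space P. B 0 \<omega> = 0 \<and> continuous_on {0..} (\<lambda>t. B t \<omega>)) \<and>
     (\<forall>s t. 0 \<le> s \<and> s < t \<longrightarrow>
        distributed P lborel (\<lambda>\<omega>. B t \<omega> - B s \<omega>) (normal_density 0 (sqrt (t - s)))) \<and>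
     (\<forall>ts. sorted ts \<and> (\<forall>x\<in>set ts. 0 \<le> x) \<longrightarrow>
        prob_space.indep_vars P (\<lambda>_. borel)
          (\<lambda>i \<omega>. B (ts ! Suc i) \<omega> - B (ts ! i) \<omega>) {..<length ts - 1})"

definition exp_neg :: "ennreal \<Rightarrow> ennreal" where
  "exp_neg z = (if z = \<top> then 0 else ennreal (exp (- enn2real z)))"

text \<open>M = sup { x : mu((x,inf)) > 0 } (= -inf for the zero measure).\<close>
definition sup_support :: "real measure \<Rightarrow> ereal" where
  "sup_support \<mu> = Sup {ereal x | x. emeasure \<mu> {x<..} > 0}"

definition ustar :: "'v measure \<Rightarrow> (real \<Rightarrow> 'v \<Rightarrow> real measure) \<Rightarrow> (real \<Rightarrow> real)
     \<Rightarrow> real \<Rightarrow> real \<Rightarrow> ereal" where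
  "ustar Ps X f t x =
    (let w = \<integral>\<^sup>+ \<omega>. exp_neg (\<integral>\<^sup>+ y. ennreal (f (y - x)) \<partial>(X t \<omega>))
                 * indicator {\<omega>\<in>space Ps. sup_support (X t \<omega>) \<le> ereal x} \<omega> \<partial>Ps
     in if w = 0 then \<infinity> else ereal (- ln (enn2real w)))"

definition rate :: "(real \<Rightarrow> real) \<Rightarrow> real \<Rightarrow> ereal \<Rightarrow> ennreal" where
  "rate dpsi lam u = (if u = \<infinity> then \<top> else ennreal (dpsi (lam + real_of_ereal u)))"

definition U1 :: "'w measure \<Rightarrow> (real \<Rightarrow> 'w \<Rightarrow> real) \<Rightarrow> (real \<Rightarrow> real) \<Rightarrow> real
     \<Rightarrow> (real \<Rightarrow> real \<Rightarrow> ereal) \<Rightarrow> real \<Rightarrow> real \<Rightarrow> ennreal" where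
  "U1 P B dpsi lam u t x =
    \<integral>\<^sup>+ \<omega>. exp_neg (\<integral>\<^sup>+ r\<in>{0..t}. rate dpsi lam (u (t - r) (x - B r \<omega>)) \<partial>lborel)
          * indicator {\<omega>\<in>space P. B t \<omega> \<le> x} \<omega> \<partial>P"

end

theory Submission
  imports Defs "HOL-Real_Asymp.Real_Asymp"
begin


lemma exp_taylor2: fixes x :: real
  shows "0 \<le> exp x - 1 - x \<and> exp x - 1 - x \<le> x\<^sup>2 * exp \<bar>x\<bar> / 2"
proof -
  obtain s where s: "\<bar>s\<bar> \<le> \<bar>x\<bar>" "exp x = (\<Sum>m<2. (x ^ m) / fact m) + (exp s / fact 2) * x ^ 2"
    using Maclaurin_exp_le[of x 2] by blast
  have e: "exp x - 1 - x = exp s / 2 * x\<^sup>2" using s(2) by (simp add: numeral_2_eq_2)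
  have "exp s \<le> exp \<bar>x\<bar>" using s(1) by simp
  then show ?thesis unfolding e by (auto intro: mult_right_mono simp: field_simps)
qed

lemma ye_bound: fixes y c :: real assumes "y > 0" "c > 0"
  shows "y\<^sup>2 * exp (- c * y) \<le> max 1 (1/c) * min (y\<^sup>2) y"
proof -
  have e1: "exp (- c * y) \<le> 1" using assms by simp
  have "c * y \<le> exp (c*y)" using exp_ge_add_one_self[of "c*y"] by linarith
  then have "c * y * exp (- c * y) \<le> 1" by (simp add: exp_minus field_simps)
  then have e2: "y * exp (- c * y) \<le> 1/c" using assms by (simp add: field_simps)
  show ?thesis
  proof (cases "y \<le> 1")
    case True
    then have "min (y\<^sup>2) y = y\<^sup>2" by (simp add: power2_eq_square mult_le_cancel_left1 assms) 
    have "y\<^sup>2 * exp (- c * y) \<le> y\<^sup>2 * max 1 (1/c)"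
      using e1 by (intro mult_left_mono) (auto intro: order_trans[OF _ max.cobounded1])
    then show ?thesis using True \<open>min (y\<^sup>2) y = y\<^sup>2\<close> by (simp add: mult.commute)
  next
    case False
    then have m: "min (y\<^sup>2) y = y" by (simp add: power2_eq_square)
    have "y\<^sup>2 * exp (- c * y) = y * (y * exp (- c*y))" by (simp add: power2_eq_square)
    also have "\<dots> \<le> y * (1/c)" using e2 assms by (intro mult_left_mono) auto
    also have "\<dots> \<le> y * max 1 (1/c)" using assms by (intro mult_left_mono) auto
    finally show ?thesis using m by (simp add: mult.commute)
  qed
qed

lemma h_nonneg: fixes l y :: real shows "0 \<le> exp (- l * y) - 1 + l * y"
  using exp_ge_add_one_self[of "- l * y"] by linarith

lemma h_nonneg2: fixes l y :: real shows "0 \<le> exp (- (l * y)) - 1 + l * y"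
  using h_nonneg[of l y] by simp

lemma h_bound: fixes l y :: real assumes "l \<ge> 0" "y > 0"
  shows "exp (- l * y) - 1 + l * y \<le> max (l\<^sup>2 * exp l) l * min (y\<^sup>2) y"
proof (cases "y \<le> 1")
  case True
  have m: "min (y\<^sup>2) y = y\<^sup>2" using True assms by (simp add: power2_eq_square mult_le_cancel_left1)
  have "exp (- l * y) - 1 + l * y \<le> (- l * y)\<^sup>2 * exp \<bar>- l * y\<bar> / 2"
    using exp_taylor2[of "- l * y"] by simp
  also have "\<dots> \<le> (l\<^sup>2 * exp l) * y\<^sup>2"
  proof -
    have "exp \<bar>- l * y\<bar> \<le> exp l" using assms True by (simp add: abs_mult mult_left_le)
    then have "(l * y)\<^sup>2 * exp \<bar>- l * y\<bar> \<le> (l * y)\<^sup>2 * exp l"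
      by (rule mult_left_mono) simp
    moreover have "(- l * y)\<^sup>2 = (l * y)\<^sup>2" by (simp add: power2_eq_square)
    ultimately have "(- l * y)\<^sup>2 * exp \<bar>- l * y\<bar> \<le> (l * y)\<^sup>2 * exp l" by metis
    moreover have "0 \<le> (- l * y)\<^sup>2 * exp \<bar>- l * y\<bar>" by simp
    ultimately have "(- l * y)\<^sup>2 * exp \<bar>- l * y\<bar> / 2 \<le> (l * y)\<^sup>2 * exp l" by linarith
    then show ?thesis by (simp add: power_mult_distrib mult_ac)
  qed
  also have "\<dots> \<le> max (l\<^sup>2 * exp l) l * y\<^sup>2" by (intro mult_right_mono) auto
  finally show ?thesis using m by simp
next
  case False
  then have m: "min (y\<^sup>2) y = y" by (simp add: power2_eq_square)
  have "exp (- l * y) \<le> 1" using assms by (simp add: mult_nonneg_nonneg)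
  then have "exp (- l * y) - 1 + l * y \<le> l * y" by simp
  also have "\<dots> \<le> max (l\<^sup>2 * exp l) l * y" using assms by (intro mult_right_mono) auto
  finally show ?thesis using m by simp
qed

lemma g_bound: fixes l y :: real assumes "l \<ge> 0" "y > 0"
  shows "0 \<le> y * (1 - exp (- l * y)) \<and> y * (1 - exp (- l * y)) \<le> max l 1 * min (y\<^sup>2) y"
proof -
  have e1: "exp (- l * y) \<le> 1" using assms by (simp add: mult_nonneg_nonneg)
  have e2: "1 - exp (- l * y) \<le> l * y" using exp_ge_add_one_self[of "- l * y"] by linarith
  show ?thesis
  proof (cases "y \<le> 1")
    case True
    have m: "min (y\<^sup>2) y = y\<^sup>2" using True assms by (simp add: power2_eq_square mult_le_cancel_left1)
    have "y * (1 - exp (- l * y)) \<le> y * (l * y)" using e2 assms by (intro mult_left_mono) auto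
    also have "\<dots> \<le> max l 1 * y\<^sup>2" by (simp add: power2_eq_square mult_right_mono assms)
    finally show ?thesis using m e1 assms by simp
  next
    case False
    then have m: "min (y\<^sup>2) y = y" by (simp add: power2_eq_square)
    have "y * (1 - exp (- l * y)) \<le> y * 1" using e1 assms by (intro mult_left_mono) auto
    also have "\<dots> \<le> max l 1 * y" using assms by simp
    finally show ?thesis using m e1 assms by simp
  qed
qed

lemma R_bound: fixes l d y :: real assumes "l > 0" "y > 0" "\<bar>d\<bar> \<le> l / 2"
  shows "\<bar>exp (- l * y) * (exp (- d * y) - 1 + d * y)\<bar> \<le> d\<^sup>2 * (max 1 (1/(l/2)) * min (y\<^sup>2) y)"
proof -
  have t: "0 \<le> exp (- d * y) - 1 + d * y" "exp (- d * y) - 1 + d * y \<le> (- d * y)\<^sup>2 * exp \<bar>- d * y\<bar> / 2"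
    using exp_taylor2[of "- d * y"] by auto
  have "\<bar>exp (- l * y) * (exp (- d * y) - 1 + d * y)\<bar> = exp (- l * y) * (exp (- d * y) - 1 + d * y)"
    using t by simp
  also have "\<dots> \<le> exp (- l * y) * ((- d * y)\<^sup>2 * exp \<bar>- d * y\<bar> / 2)"
    using t by (intro mult_left_mono) auto
  also have "\<dots> = d\<^sup>2 * (y\<^sup>2 * (exp (- l * y + \<bar>d\<bar> * y))) / 2"
    using assms by (simp add: power_mult_distrib abs_mult exp_add[symmetric])
  also have "\<dots> \<le> d\<^sup>2 * (y\<^sup>2 * exp (- (l/2) * y)) / 2"
  proof -
    have "- l * y + \<bar>d\<bar> * y \<le> - (l/2) * y" using assms by (simp add: algebra_simps mult_right_mono)
    then show ?thesis by (intro divide_right_mono mult_left_mono) auto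
  qed
  also have "\<dots> \<le> d\<^sup>2 * (y\<^sup>2 * exp (- (l/2) * y))"
    by (simp add: mult_nonneg_nonneg)
  also have "\<dots> \<le> d\<^sup>2 * (max 1 (1/(l/2)) * min (y\<^sup>2) y)"
    using ye_bound[of y "l/2"] assms by (intro mult_left_mono) auto
  finally show ?thesis .
qed

lemma psi_deriv:
  fixes n :: "real measure" and a b l0 :: real
  assumes sn: "sets n = sets borel"
    and fin: "(\<integral>\<^sup>+ y\<in>{0<..}. ennreal (min (y\<^sup>2) y) \<partial>n) < \<infinity>" and l0: "l0 > 0"
  shows "(psi a b n has_real_derivative
     (- a + 2 * b * l0 + (\<integral>y. indicator {0<..} y * (y * (1 - exp (- l0 * y))) \<partial>n))) (at l0)"
proof -
  define m where "m y = indicator {0<..} y * min (y\<^sup>2) y" for y :: real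
  define H where "H l y = indicator {0<..} y * (exp (- l*y) - 1 + l*y)" for l y :: real
  define G where "G l y = indicator {0<..} y * (y * (1 - exp (- l*y)))" for l y :: real
  define I where "I l = integral\<^sup>L n (H l)" for l
  have [measurable_cong]: "sets n = sets borel" by (rule sn)
  have mm[measurable]: "m \<in> borel_measurable n" unfolding m_def by measurable
  have Hm[measurable]: "H l \<in> borel_measurable n" for l unfolding H_def by measurable
  have Gm[measurable]: "G l \<in> borel_measurable n" for l unfolding G_def by measurable
  have im: "integrable n m"
  proof (rule integrableI_nonneg)
    show "AE x in n. 0 \<le> m x" by (auto simp: m_def power2_eq_square split: split_indicator)
    have "(\<integral>\<^sup>+ x. ennreal (m x) \<partial>n) = (\<integral>\<^sup>+ y\<in>{0<..}. ennreal (min (y\<^sup>2) y) \<partial>n)"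
      by (intro nn_integral_cong) (auto simp: m_def split: split_indicator)
    then show "(\<integral>\<^sup>+ x. ennreal (m x) \<partial>n) < \<infinity>" using fin by simp
  qed simp
  have iH: "integrable n (H l)" if "l \<ge> 0" for l
  proof (rule Bochner_Integration.integrable_bound[OF integrable_mult_left[OF im, of "max (l\<^sup>2 * exp l) l"]])
    show "AE x in n. norm (H l x) \<le> norm (m x * max (l\<^sup>2 * exp l) l)"
    proof (intro AE_I2)
      fix x :: real
      show "norm (H l x) \<le> norm (m x * max (l\<^sup>2 * exp l) l)"
      proof (cases "x > 0")
        case True
        have "norm (H l x) = exp (- l * x) - 1 + l * x" using h_nonneg[of l x] True by (simp add: H_def)
        also have "\<dots> \<le> m x * max (l\<^sup>2 * exp l) l" using h_bound[OF that True] True by (simp add: m_def mult.commute)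
        finally show ?thesis by simp
      qed (simp add: H_def)
    qed
  qed simp
  have iG: "integrable n (G l)" if "l \<ge> 0" for l
  proof (rule Bochner_Integration.integrable_bound[OF integrable_mult_left[OF im, of "max l 1"]])
    show "AE x in n. norm (G l x) \<le> norm (m x * max l 1)"
    proof (intro AE_I2)
      fix x :: real
      show "norm (G l x) \<le> norm (m x * max l 1)"
      proof (cases "x > 0")
        case True
        have "norm (G l x) = x * (1 - exp (- l * x))" using g_bound[OF that True] True by (simp add: G_def)
        also have "\<dots> \<le> m x * max l 1" using g_bound[OF that True] True by (simp add: m_def mult.commute)
        finally show ?thesis by simp
      qed (simp add: G_def)
    qed
  qed simp
  have psi_eq: "psi a b n = (\<lambda>l. - a * l + b * l\<^sup>2 + I l)"
  proof
    fix l
    have "I l = enn2real (\<integral>\<^sup>+ y. ennreal (H l y) \<partial>n)"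
      unfolding I_def by (rule integral_eq_nn_integral) (auto simp: H_def intro!: AE_I2 mult_nonneg_nonneg h_nonneg2)
    also have "(\<integral>\<^sup>+ y. ennreal (H l y) \<partial>n) = (\<integral>\<^sup>+ y\<in>{0<..}. ennreal (exp (- l * y) - 1 + l * y) \<partial>n)"
      by (intro nn_integral_cong) (auto simp: H_def split: split_indicator)
    finally show "psi a b n l = - a * l + b * l\<^sup>2 + I l" unfolding psi_def by simp
  qed
  define K where "K = max 1 (1/(l0/2))"
  have key: "\<bar>(I (l0 + d) - I l0) / d - integral\<^sup>L n (G l0)\<bar> \<le> \<bar>d\<bar> * (K * integral\<^sup>L n m)"
    if d0: "d \<noteq> 0" and dl: "\<bar>d\<bar> \<le> l0 / 2" for d
  proof -
    have l0d: "l0 + d \<ge> 0" using dl by linarith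
    have eq: "I (l0 + d) - I l0 - d * integral\<^sup>L n (G l0)
        = (\<integral>y. H (l0 + d) y - H l0 y - d * G l0 y \<partial>n)"
      unfolding I_def using iH[OF l0d] iH[of l0] iG[of l0] l0
      by (simp add: integral_diff)
    have pt: "H (l0 + d) y - H l0 y - d * G l0 y
        = indicator {0<..} y * (exp (- l0 * y) * (exp (- d * y) - 1 + d * y))" for y
    proof -
      have "exp (- (l0 + d) * y) = exp (- l0 * y) * exp (- d * y)"
        by (simp add: exp_add[symmetric] algebra_simps)
      then show ?thesis by (simp add: H_def G_def split: split_indicator) (simp add: algebra_simps)
    qed
    have "norm (\<integral>y. H (l0 + d) y - H l0 y - d * G l0 y \<partial>n) \<le> (\<integral>y. d\<^sup>2 * K * m y \<partial>n)"
    proof (rule Bochner_Integration.integral_norm_bound_integral)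
      show "integrable n (\<lambda>y. H (l0 + d) y - H l0 y - d * G l0 y)"
        using iH[OF l0d] iH[of l0] iG[of l0] l0 by auto
      show "integrable n (\<lambda>y. d\<^sup>2 * K * m y)" using im by auto
      fix y show "norm (H (l0 + d) y - H l0 y - d * G l0 y) \<le> d\<^sup>2 * K * m y"
        unfolding pt using R_bound[OF l0 _ dl, of y]
        by (auto simp: m_def K_def split: split_indicator)
    qed
    also have "\<dots> = d\<^sup>2 * (K * integral\<^sup>L n m)" by simp
    finally have "\<bar>I (l0 + d) - I l0 - d * integral\<^sup>L n (G l0)\<bar> \<le> d\<^sup>2 * (K * integral\<^sup>L n m)"
      using eq by simp
    then have "\<bar>(I (l0 + d) - I l0 - d * integral\<^sup>L n (G l0)) / d\<bar> \<le> \<bar>d\<bar> * (K * integral\<^sup>L n m)"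
      using d0 by (simp add: abs_divide divide_le_eq power2_eq_square abs_mult mult_ac)
    moreover have "(I (l0 + d) - I l0 - d * integral\<^sup>L n (G l0)) / d
        = (I (l0 + d) - I l0) / d - integral\<^sup>L n (G l0)"
      using d0 by (simp add: diff_divide_distrib)
    ultimately show ?thesis by simp
  qed
  have dI: "(I has_real_derivative integral\<^sup>L n (G l0)) (at l0)"
    unfolding DERIV_def
  proof (subst LIM_zero_iff[symmetric], rule Lim_null_comparison)
    show "\<forall>\<^sub>F x in at 0. norm ((I (l0 + x) - I l0) / x - integral\<^sup>L n (G l0)) \<le> \<bar>x\<bar> * (K * integral\<^sup>L n m)"
      unfolding eventually_at using l0 key
      by (intro exI[of _ "l0/2"]) (auto simp: dist_real_def)
    show "((\<lambda>x. \<bar>x\<bar> * (K * integral\<^sup>L n m)) \<longlongrightarrow> 0) (at 0)"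
      by (intro tendsto_eq_intros) auto
  qed
  have "((\<lambda>l. - a * l + b * l\<^sup>2 + I l) has_real_derivative (- a + 2 * b * l0 + integral\<^sup>L n (G l0))) (at l0)"
    by (rule derivative_eq_intros dI refl | simp)+
  then show ?thesis unfolding psi_eq G_def by simp
qed

lemma G_int:
  fixes n :: "real measure" and l :: real
  assumes sn: "sets n = sets borel"
    and fin: "(\<integral>\<^sup>+ y\<in>{0<..}. ennreal (min (y\<^sup>2) y) \<partial>n) < \<infinity>" and l: "l \<ge> 0"
  shows "integrable n (\<lambda>y. indicator {0<..} y * (y * (1 - exp (- l * y))))"
proof -
  define m where "m y = indicator {0<..} y * min (y\<^sup>2) y" for y :: real
  define G where "G l y = indicator {0<..} y * (y * (1 - exp (- l*y)))" for l y :: real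
  have [measurable_cong]: "sets n = sets borel" by (rule sn)
  have mm[measurable]: "m \<in> borel_measurable n" unfolding m_def by measurable
  have Gm[measurable]: "G l \<in> borel_measurable n" for l unfolding G_def by measurable
  have im: "integrable n m"
  proof (rule integrableI_nonneg)
    show "AE x in n. 0 \<le> m x" by (auto simp: m_def power2_eq_square split: split_indicator)
    have "(\<integral>\<^sup>+ x. ennreal (m x) \<partial>n) = (\<integral>\<^sup>+ y\<in>{0<..}. ennreal (min (y\<^sup>2) y) \<partial>n)"
      by (intro nn_integral_cong) (auto simp: m_def split: split_indicator)
    then show "(\<integral>\<^sup>+ x. ennreal (m x) \<partial>n) < \<infinity>" using fin by simp
  qed simp
  have "integrable n (G l)"
  proof (rule Bochner_Integration.integrable_bound[OF integrable_mult_left[OF im, of "max l 1"]])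
    show "AE x in n. norm (G l x) \<le> norm (m x * max l 1)"
    proof (intro AE_I2)
      fix x :: real
      show "norm (G l x) \<le> norm (m x * max l 1)"
      proof (cases "x > 0")
        case True
        have "norm (G l x) = x * (1 - exp (- l * x))" using g_bound[OF l True] True by (simp add: G_def)
        also have "\<dots> \<le> m x * max l 1" using g_bound[OF l True] True by (simp add: m_def mult.commute)
        finally show ?thesis by simp
      qed (simp add: G_def)
    qed
  qed simp
  then show ?thesis unfolding G_def .
qed

lemma dpsi_mono:
  fixes n :: "real measure" and a b l0 l1 :: real
  assumes sn: "sets n = sets borel"
    and fin: "(\<integral>\<^sup>+ y\<in>{0<..}. ennreal (min (y\<^sup>2) y) \<partial>n) < \<infinity>" and l0: "l0 > 0" and l01: "l0 \<le> l1"
    and b: "b \<ge> 0"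
  shows "deriv (psi a b n) l0 \<le> deriv (psi a b n) l1"
proof -
  have l1: "l1 > 0" using l0 l01 by simp
  have "(\<integral>y. indicator {0<..} y * (y * (1 - exp (- l0 * y))) \<partial>n)
      \<le> (\<integral>y. indicator {0<..} y * (y * (1 - exp (- l1 * y))) \<partial>n)"
  proof (rule integral_mono)
    show "integrable n (\<lambda>y. indicator {0<..} y * (y * (1 - exp (- l0 * y))))"
      using G_int[OF sn fin] l0 by simp
    show "integrable n (\<lambda>y. indicator {0<..} y * (y * (1 - exp (- l1 * y))))"
      using G_int[OF sn fin] l1 by simp
    fix y :: real
    show "indicator {0<..} y * (y * (1 - exp (- l0 * y))) \<le> indicator {0<..} y * (y * (1 - exp (- l1 * y)))"
    proof (cases "y > 0")
      case True
      have "exp (- l1 * y) \<le> exp (- l0 * y)" using True l01 by (simp add: mult_right_mono)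
      then show ?thesis using True by (simp add: mult_left_mono)
    qed simp
  qed
  moreover have "b * l0 \<le> b * l1" using b l01 by (simp add: mult_left_mono)
  ultimately show ?thesis
    using DERIV_imp_deriv[OF psi_deriv[OF sn fin l0, of a b]] DERIV_imp_deriv[OF psi_deriv[OF sn fin l1, of a b]]
    by simp
qed


lemma exp_neg_le1: "exp_neg z \<le> 1"
  by (simp add: exp_neg_def)

lemma exp_neg_bound: fixes c :: real assumes "c \<ge> 0" "ennreal c \<le> z"
  shows "exp_neg z \<le> ennreal (exp (- c))"
proof (cases "z = \<top>")
  case False
  then have "enn2real (ennreal c) \<le> enn2real z" using assms by (intro enn2real_mono) (auto simp: top.not_eq_extremum)
  then have "c \<le> enn2real z" using assms by simp
  then show ?thesis using False by (simp add: exp_neg_def)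
qed (simp add: exp_neg_def)

lemma ustar_nonneg: assumes "prob_space Ps" shows "ustar Ps X f s z \<ge> 0"
proof -
  interpret prob_space Ps by fact
  define w where "w = (\<integral>\<^sup>+ \<omega>. exp_neg (\<integral>\<^sup>+ y. ennreal (f (y - z)) \<partial>(X s \<omega>))
                 * indicator {\<omega>\<in>space Ps. sup_support (X s \<omega>) \<le> ereal z} \<omega> \<partial>Ps)"
  have "w \<le> (\<integral>\<^sup>+ \<omega>. 1 \<partial>Ps)" unfolding w_def
    by (intro nn_integral_mono) (auto simp: exp_neg_le1 split: split_indicator)
  then have w1: "w \<le> 1" by (simp add: emeasure_space_1)
  show ?thesis
  proof (cases "w = 0")
    case False
    have "0 < enn2real w" using False w1 by (simp add: enn2real_positive_iff top.not_eq_extremum order_le_less_trans[OF w1] zero_less_iff_neq_zero)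
    moreover have "enn2real w \<le> 1" using w1 by (metis enn2real_mono ennreal_one_less_top enn2real_1)
    ultimately have "ln (enn2real w) \<le> 0" by simp
    then show ?thesis using False unfolding ustar_def w_def[symmetric] by (simp add: Let_def)
  qed (simp add: ustar_def w_def[symmetric] Let_def)
qed

lemma gauss_tail: fixes \<sigma> x :: real assumes s: "\<sigma> > 0" and x: "x < 0"
  shows "(\<integral>\<^sup>+ y. ennreal (normal_density 0 \<sigma> y) * indicator {..x} y \<partial>lborel)
     \<le> ennreal (\<sigma>\<^sup>2 / (- x) * normal_density 0 \<sigma> x)"
proof -
  have "(\<integral>\<^sup>+ y. ennreal (normal_density 0 \<sigma> y) * indicator {..x} y \<partial>lborel)
     \<le> (\<integral>\<^sup>+ y. ennreal ((- y) / (- x) * normal_density 0 \<sigma> y) * indicator {..x} y \<partial>lborel)"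
  proof (intro nn_integral_mono)
    fix y
    show "ennreal (normal_density 0 \<sigma> y) * indicator {..x} y
        \<le> ennreal ((- y) / (- x) * normal_density 0 \<sigma> y) * indicator {..x} y"
    proof (cases "y \<le> x")
      case True
      have "1 \<le> (- y) / (- x)" using True x by simp
      then have "normal_density 0 \<sigma> y \<le> (- y) / (- x) * normal_density 0 \<sigma> y"
        using mult_right_mono[OF \<open>1 \<le> (- y) / (- x)\<close> normal_density_nonneg[of 0 \<sigma> y]] by simp
      then show ?thesis using True by (simp add: ennreal_leI)
    qed simp
  qed
  also have "\<dots> = (\<integral>\<^sup>+ z. ennreal (z / (- x) * normal_density 0 \<sigma> z) * indicator {- x..} z \<partial>lborel)"
  proof -
    have "(\<integral>\<^sup>+ y. ennreal ((- y) / (- x) * normal_density 0 \<sigma> y) * indicator {..x} y \<partial>lborel)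
        = ennreal \<bar>- 1\<bar> * (\<integral>\<^sup>+ z. ennreal ((- (0 + -1 * z)) / (- x) * normal_density 0 \<sigma> (0 + -1 * z)) * indicator {..x} (0 + -1 * z) \<partial>lborel)"
      by (rule nn_integral_real_affine) auto
    also have "\<dots> = (\<integral>\<^sup>+ z. ennreal (z / (- x) * normal_density 0 \<sigma> z) * indicator {- x..} z \<partial>lborel)"
      by (simp, intro nn_integral_cong) (auto simp: normal_density_def split: split_indicator)
    finally show ?thesis .
  qed
  also have "\<dots> = ennreal (0 - (- (\<sigma>\<^sup>2 / (- x)) * normal_density 0 \<sigma> (- x)))"
  proof (rule nn_integral_FTC_atLeast[where F = "\<lambda>z. - (\<sigma>\<^sup>2 / (- x)) * normal_density 0 \<sigma> z" and T = 0
        and f = "\<lambda>z. z / (- x) * normal_density 0 \<sigma> z"])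
    show "(\<lambda>z. z / (- x) * normal_density 0 \<sigma> z) \<in> borel_measurable borel" by measurable
    fix z :: real assume z: "- x \<le> z"
    show "0 \<le> z / (- x) * normal_density 0 \<sigma> z" using z x normal_density_nonneg[of 0 \<sigma> z]
      by (intro mult_nonneg_nonneg divide_nonneg_nonneg) auto
    show "((\<lambda>z. - (\<sigma>\<^sup>2 / (- x)) * normal_density 0 \<sigma> z) has_real_derivative z / (- x) * normal_density 0 \<sigma> z) (at z)"
      unfolding normal_density_def
      using s x by (auto intro!: derivative_eq_intros simp: field_simps power2_eq_square)
  next
    show "((\<lambda>z. - (\<sigma>\<^sup>2 / (- x)) * normal_density 0 \<sigma> z) \<longlongrightarrow> 0) at_top"
      unfolding normal_density_def using s by real_asymp
  qed
  also have "\<dots> = ennreal (\<sigma>\<^sup>2 / (- x) * normal_density 0 \<sigma> x)"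
    by (simp add: normal_density_def)
  finally show ?thesis .
qed


lemma final_alg: fixes \<alpha> \<delta> t q :: real assumes a: "\<alpha> > 0" and d: "\<delta> < 0" and t: "t > 0"
  shows "exp (- q * t) * ((sqrt t)\<^sup>2 / (- (sqrt (2 * \<alpha>) * \<delta> * t)) * normal_density 0 (sqrt t) (sqrt (2 * \<alpha>) * \<delta> * t))
    = 1 / (2 * sqrt (pi * \<alpha>) * \<bar>\<delta>\<bar>) * t powr (-1/2) * exp (- (q + \<alpha> * \<delta>\<^sup>2) * t)"
proof -
  have st: "(sqrt t)\<^sup>2 = t" using t by simp
  have sq: "(sqrt (2 * \<alpha>) * \<delta> * t)\<^sup>2 = 2 * \<alpha> * \<delta>\<^sup>2 * t\<^sup>2" using a by (simp add: power_mult_distrib)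
  have e1: "exp (- (sqrt (2 * \<alpha>) * \<delta> * t - 0)\<^sup>2 / (2 * t)) = exp (- (\<alpha> * \<delta>\<^sup>2 * t))"
    using t sq by (simp add: power2_eq_square field_simps)
  have nd: "normal_density 0 (sqrt t) (sqrt (2 * \<alpha>) * \<delta> * t) = 1 / sqrt (2 * pi * t) * exp (- (\<alpha> * \<delta>\<^sup>2 * t))"
    unfolding normal_density_def st e1 ..
  have p: "t powr (-1/2) = 1 / sqrt t" 
  proof -
    have "t powr (-1/2) = t powr (- (1/2))" by simp
    also have "\<dots> = 1 / t powr (1/2)" by (rule powr_minus_divide)
    also have "\<dots> = 1 / sqrt t" using t by (simp add: powr_half_sqrt)
    finally show ?thesis .
  qed
  have s2: "sqrt (2 * pi * t) * sqrt (2 * \<alpha>) = 2 * sqrt (pi * \<alpha>) * sqrt t"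
  proof -
    have "sqrt (2 * pi * t) * sqrt (2 * \<alpha>) = sqrt (4 * (pi * \<alpha>) * t)" by (simp add: real_sqrt_mult[symmetric] mult_ac)
    also have "\<dots> = 2 * sqrt (pi * \<alpha>) * sqrt t" by (simp add: real_sqrt_mult)
    finally show ?thesis .
  qed
  have ex: "exp (- (q + \<alpha> * \<delta>\<^sup>2) * t) = exp (- q * t) * exp (- (\<alpha> * \<delta>\<^sup>2 * t))"
    by (simp add: exp_add[symmetric] algebra_simps)
  have pos: "sqrt (2 * \<alpha>) > 0" "sqrt t > 0" "sqrt (pi * \<alpha>) > 0" "sqrt (2 * pi * t) > 0" using a t by auto
  have c1: "t / (- (sqrt (2 * \<alpha>) * \<delta> * t)) * (1 / sqrt (2 * pi * t)) = 1 / (2 * sqrt (pi * \<alpha>) * \<bar>\<delta>\<bar>) * (1 / sqrt t)"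
  proof -
    have "t / (- (sqrt (2 * \<alpha>) * \<delta> * t)) = 1 / (sqrt (2 * \<alpha>) * \<bar>\<delta>\<bar>)"
      using t d by (simp add: abs_if)
    then have "t / (- (sqrt (2 * \<alpha>) * \<delta> * t)) * (1 / sqrt (2 * pi * t)) = 1 / (\<bar>\<delta>\<bar> * (sqrt (2 * pi * t) * sqrt (2 * \<alpha>)))"
      by (simp add: mult_ac)
    also have "\<dots> = 1 / (\<bar>\<delta>\<bar> * (2 * sqrt (pi * \<alpha>) * sqrt t))" unfolding s2 ..
    finally show ?thesis by (simp add: mult_ac)
  qed
  have "exp (- q * t) * (t / (- (sqrt (2 * \<alpha>) * \<delta> * t)) * (1 / sqrt (2 * pi * t) * exp (- (\<alpha> * \<delta>\<^sup>2 * t))))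
     = (t / (- (sqrt (2 * \<alpha>) * \<delta> * t)) * (1 / sqrt (2 * pi * t))) * (exp (- q * t) * exp (- (\<alpha> * \<delta>\<^sup>2 * t)))"
    by (simp only: mult_ac)
  also have "\<dots> = 1 / (2 * sqrt (pi * \<alpha>) * \<bar>\<delta>\<bar>) * (1 / sqrt t) * (exp (- q * t) * exp (- (\<alpha> * \<delta>\<^sup>2 * t)))"
    unfolding c1 ..
  finally show ?thesis unfolding st nd p ex .
qed


theorem lemma3p1:
  fixes \<alpha> \<beta> lam t \<delta> :: real and n :: "real measure"
    and P :: "'w measure" and B :: "real \<Rightarrow> 'w \<Rightarrow> real"
    and Ps :: "'v measure" and X :: "real \<Rightarrow> 'v \<Rightarrow> real measure"
    and f :: "real \<Rightarrow> real"
  assumes "\<alpha> > 0" and "\<beta> \<ge> 0"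
    and "sets n = sets borel" and "sigma_finite_measure n" and "emeasure n {..0} = 0"
    and "(\<integral>\<^sup>+ y\<in>{0<..}. ennreal (min (y\<^sup>2) y) \<partial>n) < \<infinity>"
    and "filterlim (psi \<alpha> \<beta> n) at_top at_top"
    and "lam > 0" and "psi \<alpha> \<beta> n lam = 0" and "\<forall>l>lam. psi \<alpha> \<beta> n l \<noteq> 0"
    and "std_bm P B"
    and "prob_space Ps"
    and "\<forall>s \<omega>. \<omega> \<in> space Ps \<longrightarrow> finite_measure (X s \<omega>) \<and> sets (X s \<omega>) = sets borel"
    and "f \<in> borel_measurable borel" and "\<forall>y. 0 \<le> f y"
    and "t > 0"
  shows "U1 P B (deriv (psi \<alpha> \<beta> n)) lam (ustar Ps X f) t (sqrt (2 * \<alpha>) * \<delta> * t)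
     \<le> ennreal (if \<delta> \<ge> 0 then exp (- deriv (psi \<alpha> \<beta> n) lam * t)
         else 1 / (2 * sqrt (pi * \<alpha>) * \<bar>\<delta>\<bar>) * t powr (-1/2)
              * exp (- (deriv (psi \<alpha> \<beta> n) lam + \<alpha> * \<delta>\<^sup>2) * t))"
proof -
  note a = assms
  define q where "q = deriv (psi \<alpha> \<beta> n) lam"
  define x where "x = sqrt (2 * \<alpha>) * \<delta> * t"
  define S where "S = {\<omega>\<in>space P. B t \<omega> \<le> x}"
  define D where "D = (\<lambda>\<omega>. B t \<omega> - B 0 \<omega>)"
  have ps: "prob_space P" using a(11) by (simp add: std_bm_def)
  then interpret P: prob_space P .
  have B0: "\<forall>\<omega>\<in>space P. B 0 \<omega> = 0" using a(11) by (simp add: std_bm_def)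
  have dist: "distributed P lborel D (normal_density 0 (sqrt t))"
  proof -
    have "\<forall>s t. 0 \<le> s \<and> s < t \<longrightarrow>
        distributed P lborel (\<lambda>\<omega>. B t \<omega> - B s \<omega>) (normal_density 0 (sqrt (t - s)))"
      using a(11) unfolding std_bm_def by blast
    then have "distributed P lborel (\<lambda>\<omega>. B t \<omega> - B 0 \<omega>) (normal_density 0 (sqrt (t - 0)))"
      using a(16) by blast
    then show ?thesis unfolding D_def by simp
  qed
  have SD: "S = D -` {..x} \<inter> space P" using B0 by (auto simp: S_def D_def)
  have Ssets: "S \<in> sets P" unfolding SD
    using measurable_sets[OF distributed_measurable[OF dist], of "{..x}"] by simp
  have emS: "emeasure P S = (\<integral>\<^sup>+ y. ennreal (normal_density 0 (sqrt t) y) * indicator {..x} y \<partial>lborel)"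
    unfolding SD by (rule distributed_emeasure[OF dist]) simp
  have mono: "q \<le> deriv (psi \<alpha> \<beta> n) (lam + v)" if "v \<ge> 0" for v
    unfolding q_def using dpsi_mono[OF a(3) a(6) a(8) _ a(2)] that by simp
  have pt: "exp_neg (\<integral>\<^sup>+ r\<in>{0..t}. rate (deriv (psi \<alpha> \<beta> n)) lam (ustar Ps X f (t - r) (x - B r \<omega>)) \<partial>lborel)
      \<le> ennreal (exp (- q * t))" for \<omega>
  proof (cases "q \<le> 0")
    case True
    have "exp_neg (\<integral>\<^sup>+ r\<in>{0..t}. rate (deriv (psi \<alpha> \<beta> n)) lam (ustar Ps X f (t - r) (x - B r \<omega>)) \<partial>lborel) \<le> 1"
      by (rule exp_neg_le1)
    also have "1 \<le> ennreal (exp (- q * t))" using True a(16) by (simp add: mult_nonpos_nonneg)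
    finally show ?thesis .
  next
    case False
    have r: "ennreal q \<le> rate (deriv (psi \<alpha> \<beta> n)) lam (ustar Ps X f s z)" for s z
    proof -
      have u0: "ustar Ps X f s z \<ge> 0" by (rule ustar_nonneg[OF a(12)])
      show ?thesis
      proof (cases "ustar Ps X f s z = \<infinity>")
        case False
        then obtain v where v: "ustar Ps X f s z = ereal v" using u0 by (cases "ustar Ps X f s z") auto
        then have "v \<ge> 0" using u0 by simp
        then show ?thesis using v mono[of v] by (simp add: rate_def ennreal_leI)
      qed (simp add: rate_def)
    qed
    have "ennreal (q * t) = (\<integral>\<^sup>+ r. ennreal q * indicator {0..t} r \<partial>lborel)"
      using a(16) False by (simp add: nn_integral_cmult_indicator ennreal_mult)
    also have "\<dots> \<le> (\<integral>\<^sup>+ r\<in>{0..t}. rate (deriv (psi \<alpha> \<beta> n)) lam (ustar Ps X f (t - r) (x - B r \<omega>)) \<partial>lborel)"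
      by (intro nn_integral_mono) (auto simp: r split: split_indicator)
    finally have "exp_neg (\<integral>\<^sup>+ r\<in>{0..t}. rate (deriv (psi \<alpha> \<beta> n)) lam (ustar Ps X f (t - r) (x - B r \<omega>)) \<partial>lborel)
        \<le> ennreal (exp (- (q * t)))"
      using False a(16) by (intro exp_neg_bound) auto
    then show ?thesis by simp
  qed
  have U: "U1 P B (deriv (psi \<alpha> \<beta> n)) lam (ustar Ps X f) t x \<le> ennreal (exp (- q * t)) * emeasure P S"
  proof -
    have "U1 P B (deriv (psi \<alpha> \<beta> n)) lam (ustar Ps X f) t x
        \<le> (\<integral>\<^sup>+ \<omega>. ennreal (exp (- q * t)) * indicator S \<omega> \<partial>P)"
      unfolding U1_def S_def[symmetric]
      by (intro nn_integral_mono mult_right_mono pt) auto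
    also have "\<dots> = ennreal (exp (- q * t)) * emeasure P S"
      using Ssets by (rule nn_integral_cmult_indicator)
    finally show ?thesis .
  qed
  show ?thesis
  proof (cases "\<delta> \<ge> 0")
    case True
    have "ennreal (exp (- q * t)) * emeasure P S \<le> ennreal (exp (- q * t)) * 1"
      by (intro mult_left_mono) (auto simp: P.emeasure_le_1)
    then show ?thesis using U True unfolding x_def q_def by simp
  next
    case False
    have x0: "x < 0" using False a(1) a(16) unfolding x_def by (simp add: mult_neg_pos mult_pos_neg)
    have st: "sqrt t > 0" using a(16) by simp
    have "emeasure P S \<le> ennreal ((sqrt t)\<^sup>2 / (- x) * normal_density 0 (sqrt t) x)"
      unfolding emS by (rule gauss_tail[OF st x0])
    then have "ennreal (exp (- q * t)) * emeasure P S
        \<le> ennreal (exp (- q * t)) * ennreal ((sqrt t)\<^sup>2 / (- x) * normal_density 0 (sqrt t) x)"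
      by (intro mult_left_mono) auto
    also have "\<dots> = ennreal (exp (- q * t) * ((sqrt t)\<^sup>2 / (- x) * normal_density 0 (sqrt t) x))"
      by (rule ennreal_mult'[symmetric]) simp
    also have "\<dots> = ennreal (1 / (2 * sqrt (pi * \<alpha>) * \<bar>\<delta>\<bar>) * t powr (-1/2) * exp (- (q + \<alpha> * \<delta>\<^sup>2) * t))"
      unfolding x_def using final_alg[OF a(1) _ a(16), of \<delta> q] False by simp
    finally show ?thesis using U False unfolding x_def q_def by simp
  qed
qed

end
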